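(* Let $X$ be a real Banach space, $K$ a compact Hausdorff space and $T\colon X\to C(K)$ a U-embedding. Let $F_T\colon K\to X^*$ be given by $\langle x,F_T(k)\rangle=(Tx)(k)$, let $A_0:=F_T^{-1}(\mathrm{Ext}\,B_{X^*})$, and let $E$ be the weak$^*$ closure of $F_T(A_0)=\mathrm{Ext}\,B_{X^*}\cap F_T(K)$ (equivalently $E=F_T(\overline{A_0})$). Then $E$ is a proper U-suitable set for $X$.
   Context: For a linear isometry $T\colon X\to Y$ between Banach spaces, $T$ is a U-embedding if every $x^*\in X^*$ has a unique $y^*\in Y^*$ with $T^*(y^* )=x^*$ and $\|y^*\|=\|x^*\|$. For $x\in S_X$ (unit sphere), $\mathfrak F(x):=\{x^*\in S_{X^*}:\langle x,x^*\rangle=1\}$ is the face of $B_{X^*}$ determined by $x$. A weak$^*$-closed set $E\subset B_{X^*}$ is U-suitable if (i) $E\cap(-E)\cap S_{X^*}=\emptyset$ and (ii) $E\cup(-E)=\overline{\mathrm{Ext}\,B_{X^*}}^{w^*}$. It is a proper U-suitable set if moreover (iii) for every $x\in S_X$, $E\cap\mathfrak F(x)=E\cap\overline{\mathrm{Ext}\,\mathfrak F(x)}^{w^*}$. *)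

theory Defs
  imports "HOL-Analysis.Analysis"
begin


definition weak_star :: "('a::real_normed_vector \<Rightarrow>\<^sub>L real) topology" where
  "weak_star = topology_generated_by
     {{f. blinfun_apply f x \<in> U} | x U. open (U :: real set)}"

definition ext_set :: "'v::real_vector set \<Rightarrow> 'v set" where
  "ext_set S = {x. x extreme_point_of S}"

definition dual_ball :: "('a::real_normed_vector \<Rightarrow>\<^sub>L real) set" where
  "dual_ball = cball 0 1"

definition face :: "'a::real_normed_vector \<Rightarrow> ('a \<Rightarrow>\<^sub>L real) set" where
  "face x = {f. norm f = 1 \<and> blinfun_apply f x = 1}"

definition U_embedding :: "('a::real_normed_vector \<Rightarrow> 'b::real_normed_vector) \<Rightarrow> bool" where
  "U_embedding T \<longleftrightarrow> linear T \<and> (\<forall>x. norm (T x) = norm x) \<and>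
     (\<forall>xs :: 'a \<Rightarrow>\<^sub>L real. \<exists>!ys :: 'b \<Rightarrow>\<^sub>L real.
        (\<forall>x. blinfun_apply ys (T x) = blinfun_apply xs x) \<and> norm ys = norm xs)"

definition U_suitable :: "('a::real_normed_vector \<Rightarrow>\<^sub>L real) set \<Rightarrow> bool" where
  "U_suitable E \<longleftrightarrow> E \<subseteq> dual_ball \<and> closedin weak_star E \<and>
     E \<inter> uminus ` E \<inter> sphere 0 1 = {} \<and>
     E \<union> uminus ` E = weak_star closure_of (ext_set dual_ball)"

definition proper_U_suitable :: "('a::real_normed_vector \<Rightarrow>\<^sub>L real) set \<Rightarrow> bool" where
  "proper_U_suitable E \<longleftrightarrow> U_suitable E \<and>
     (\<forall>x. norm x = 1 \<longrightarrow>
        E \<inter> face x = E \<inter> (weak_star closure_of (ext_set (face x))))"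

definition F_T :: "('a::real_normed_vector \<Rightarrow> ('k::topological_space \<Rightarrow>\<^sub>C real)) \<Rightarrow> 'k \<Rightarrow> ('a \<Rightarrow>\<^sub>L real)" where
  "F_T T k = Blinfun (\<lambda>x. apply_bcontfun (T x) k)"

end

theory Submission
  imports Defs
begin

lemma ws_topspace[simp]: "topspace (weak_star :: ('a::real_normed_vector \<Rightarrow>\<^sub>L real) topology) = UNIV"
  unfolding weak_star_def by (auto intro!: exI[of _ "{f. blinfun_apply f 0 \<in> UNIV}"])

lemma ws_open_basic: "open U \<Longrightarrow> openin weak_star {f::'a::real_normed_vector \<Rightarrow>\<^sub>L real. blinfun_apply f x \<in> U}"
  unfolding weak_star_def by (rule topology_generated_by_Basis) blast

lemma ws_eval_cont: "continuous_map (weak_star::('a::real_normed_vector \<Rightarrow>\<^sub>L real) topology) euclideanreal (\<lambda>f. blinfun_apply f x)"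
  unfolding continuous_map_def
  by (auto simp: ws_open_basic vimage_def)

lemma ws_into:
  assumes "\<And>x. continuous_map X euclideanreal (\<lambda>t. blinfun_apply (g t) x)"
  shows "continuous_map X (weak_star::('a::real_normed_vector \<Rightarrow>\<^sub>L real) topology) g"
  unfolding weak_star_def
proof (rule continuous_on_generated_topo)
  fix U assume "U \<in> {{f::'a \<Rightarrow>\<^sub>L real. blinfun_apply f x \<in> U} | x U. open (U :: real set)}"
  then obtain x V where U: "U = {f. blinfun_apply f x \<in> V}" "open V" by blast
  have "g -` U \<inter> topspace X = {t \<in> topspace X. (\<lambda>t. blinfun_apply (g t) x) t \<in> V}"
    using U by auto
  then show "openin X (g -` U \<inter> topspace X)"
    using openin_continuous_map_preimage[OF assms[of x], of V] U by simp
qed (auto intro!: exI[of _ "{f. blinfun_apply f 0 \<in> UNIV}"])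

lemma ws_Hausdorff: "Hausdorff_space (weak_star::('a::real_normed_vector \<Rightarrow>\<^sub>L real) topology)"
  unfolding Hausdorff_space_def
proof (intro allI impI)
  fix f g :: "'a \<Rightarrow>\<^sub>L real"
  assume "f \<in> topspace weak_star \<and> g \<in> topspace weak_star \<and> f \<noteq> g"
  then obtain x where x: "blinfun_apply f x \<noteq> blinfun_apply g x"
    by (meson blinfun_eqI)
  define d where "d = \<bar>blinfun_apply f x - blinfun_apply g x\<bar> / 2"
  have d: "d > 0" using x by (simp add: d_def)
  show "\<exists>U V. openin weak_star U \<and> openin weak_star V \<and> f \<in> U \<and> g \<in> V \<and> disjnt U V"
  proof (intro exI conjI)
    show "openin weak_star {h::'a \<Rightarrow>\<^sub>L real. blinfun_apply h x \<in> ball (blinfun_apply f x) d}"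
      by (rule ws_open_basic) simp
    show "openin weak_star {h::'a \<Rightarrow>\<^sub>L real. blinfun_apply h x \<in> ball (blinfun_apply g x) d}"
      by (rule ws_open_basic) simp
    show "disjnt {h::'a \<Rightarrow>\<^sub>L real. blinfun_apply h x \<in> ball (blinfun_apply f x) d}
                 {h::'a \<Rightarrow>\<^sub>L real. blinfun_apply h x \<in> ball (blinfun_apply g x) d}"
      unfolding disjnt_def d_def by (auto simp: dist_real_def) (smt (verit))
  qed (use d in auto)
qed

lemma ws_uminus_cont: "continuous_map (weak_star::('a::real_normed_vector \<Rightarrow>\<^sub>L real) topology) weak_star uminus"
  by (rule ws_into) (simp add: blinfun.minus_left continuous_map_minus ws_eval_cont)

lemma ws_closed_eval: "closedin (weak_star::('a::real_normed_vector \<Rightarrow>\<^sub>L real) topology) {f. blinfun_apply f x = c}"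
  using closedin_continuous_map_preimage[OF ws_eval_cont[of x], of "{c}"] by simp

lemma ex1_uniq: "\<exists>!x. P x \<Longrightarrow> P a \<Longrightarrow> P b \<Longrightarrow> a = b" by blast

lemma UE_linear: "U_embedding T \<Longrightarrow> linear T" by (simp add: U_embedding_def)
lemma UE_norm: "U_embedding T \<Longrightarrow> norm (T x) = norm x" by (simp add: U_embedding_def)

lemma FT_bl:
  fixes T :: "'a::real_normed_vector \<Rightarrow> ('k::topological_space \<Rightarrow>\<^sub>C real)"
  assumes "U_embedding T"
  shows "bounded_linear (\<lambda>x. apply_bcontfun (T x) k)"
proof -
  interpret linear T using UE_linear[OF assms] .
  show ?thesis
  proof (rule bounded_linear_intro[where K=1])
    show "apply_bcontfun (T (x + y)) k = apply_bcontfun (T x) k + apply_bcontfun (T y) k" for x y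
      by (simp add: add)
    show "apply_bcontfun (T (c *\<^sub>R x)) k = c *\<^sub>R apply_bcontfun (T x) k" for c x
      by (simp add: scale)
    show "norm (apply_bcontfun (T x) k) \<le> norm x * 1" for x
      using norm_bounded[of "T x" k] UE_norm[OF assms, of x] by simp
  qed
qed

lemma FT_apply:
  assumes "U_embedding T"
  shows "blinfun_apply (F_T T k) x = apply_bcontfun (T x) k"
  unfolding F_T_def using bounded_linear_Blinfun_apply[OF FT_bl[OF assms]] by simp

lemma FT_norm:
  assumes "U_embedding T"
  shows "norm (F_T T k) \<le> 1"
proof (rule norm_blinfun_bound)
  fix x
  have "norm (apply_bcontfun (T x) k) \<le> norm (T x)" by (rule norm_bounded)
  then show "norm (blinfun_apply (F_T T k) x) \<le> 1 * norm x"
    by (simp add: FT_apply[OF assms] UE_norm[OF assms])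
qed simp

lemma FT_cont:
  assumes "U_embedding T"
  shows "continuous_map euclidean weak_star (F_T T)"
  by (rule ws_into) (simp add: FT_apply[OF assms])

lemma FT_closed:
  fixes T :: "'a::real_normed_vector \<Rightarrow> ('k::topological_space \<Rightarrow>\<^sub>C real)"
  assumes "U_embedding T" "compact (UNIV::'k set)"
  shows "closedin weak_star (range (F_T T))"
  by (rule compactin_imp_closedin[OF ws_Hausdorff image_compactin[OF _ FT_cont[OF assms(1)]]])
     (simp add: assms(2))

definition delta :: "'k::topological_space \<Rightarrow> (('k \<Rightarrow>\<^sub>C real) \<Rightarrow>\<^sub>L real)" where
  "delta k = Blinfun (\<lambda>g. apply_bcontfun g k)"

lemma delta_bl: "bounded_linear (\<lambda>g::('k::topological_space \<Rightarrow>\<^sub>C real). apply_bcontfun g k)"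
  by (rule bounded_linear_intro[where K=1]) (auto, metis norm_bounded real_norm_def)

lemma delta_apply[simp]: "blinfun_apply (delta k) g = apply_bcontfun g k"
  unfolding delta_def by (subst bounded_linear_Blinfun_apply[OF delta_bl]) simp

lemma norm_const1: "norm (const_bcontfun (1::real) :: ('k::topological_space \<Rightarrow>\<^sub>C real)) = 1"
proof (rule antisym)
  show "norm (const_bcontfun (1::real) :: ('k \<Rightarrow>\<^sub>C real)) \<le> 1"
    by (rule norm_bound) simp
  have "norm (apply_bcontfun (const_bcontfun (1::real) :: ('k \<Rightarrow>\<^sub>C real)) undefined) \<le> norm (const_bcontfun (1::real) :: ('k \<Rightarrow>\<^sub>C real))"
    by (rule norm_bounded)
  then show "1 \<le> norm (const_bcontfun (1::real) :: ('k \<Rightarrow>\<^sub>C real))" by simp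
qed

lemma delta_norm: "norm (delta k) = 1"
proof (rule antisym)
  show "norm (delta k) \<le> 1"
    by (rule norm_blinfun_bound) (auto, metis norm_bounded real_norm_def)
  have "norm (blinfun_apply (delta k) (const_bcontfun 1)) \<le> norm (delta k) * norm (const_bcontfun (1::real) :: ('a \<Rightarrow>\<^sub>C real))"
    by (rule norm_blinfun)
  then show "1 \<le> norm (delta k)" by (simp add: norm_const1)
qed

lemma delta_ext: "U_embedding T \<Longrightarrow> blinfun_apply (delta k) (T x) = blinfun_apply (F_T T k) x"
  by (simp add: FT_apply)

definition bmul :: "('k::topological_space \<Rightarrow>\<^sub>C real) \<Rightarrow> ('k \<Rightarrow>\<^sub>C real) \<Rightarrow> ('k \<Rightarrow>\<^sub>C real)" where
  "bmul f g = Bcontfun (\<lambda>t. apply_bcontfun f t * apply_bcontfun g t)"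

lemma bmul_apply[simp]: "apply_bcontfun (bmul f g) t = apply_bcontfun f t * apply_bcontfun g t"
proof -
  have "(\<lambda>t. apply_bcontfun f t * apply_bcontfun g t) \<in> bcontfun"
  proof (rule bcontfun_normI)
    show "continuous_on UNIV (\<lambda>t. apply_bcontfun f t * apply_bcontfun g t)"
      by (intro continuous_intros) auto
    show "norm (apply_bcontfun f t * apply_bcontfun g t) \<le> norm f * norm g" for t
      by (simp add: abs_mult mult_mono' norm_bounded[of f t, simplified] norm_bounded[of g t, simplified])
  qed
  then show ?thesis unfolding bmul_def by (simp add: Bcontfun_inverse)
qed

lemma bmul_norm: "norm (bmul f g) \<le> norm f * norm g"
  by (rule norm_bound) (simp add: abs_mult mult_mono' norm_bounded[of f, simplified] norm_bounded[of g, simplified])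

lemma bmul_norm01: "(\<And>t. 0 \<le> apply_bcontfun f t \<and> apply_bcontfun f t \<le> 1) \<Longrightarrow> norm (bmul f g) \<le> norm g"
  by (rule norm_bound) (simp add: abs_mult mult_le_one mult_right_le_one_le norm_bounded[of g, simplified]
      mult_mono[of _ 1 _ "norm g", simplified])

lemma bmul_bl: "bounded_linear (bmul f)"
  by (rule bounded_linear_intro[where K="norm f"])
     (auto intro!: bcontfun_eqI simp: algebra_simps, metis bmul_norm mult.commute)

lemma bc_make:
  assumes "continuous_on UNIV f" "\<And>t. \<bar>f t\<bar> \<le> (B::real)"
  shows "apply_bcontfun (Bcontfun f :: ('k::topological_space \<Rightarrow>\<^sub>C real)) = f"
proof -
  have "f \<in> bcontfun" by (rule bcontfun_normI[where b=B]) (use assms in auto)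
  then show ?thesis by (simp add: Bcontfun_inverse)
qed

lemma abs_apply_le: "\<bar>apply_bcontfun (g::('k::topological_space \<Rightarrow>\<^sub>C real)) t\<bar> \<le> norm g"
  using norm_bounded[of g t] by simp

lemma nu_one_le:
  fixes \<nu> :: "('k::topological_space \<Rightarrow>\<^sub>C real) \<Rightarrow>\<^sub>L real"
  assumes "norm \<nu> \<le> 1"
  shows "\<bar>blinfun_apply \<nu> g\<bar> \<le> norm g"
proof -
  have "norm (blinfun_apply \<nu> g) \<le> norm \<nu> * norm g" by (rule norm_blinfun)
  also have "\<dots> \<le> norm g" using assms by (simp add: mult_left_le_one_le)
  finally show ?thesis by simp
qed

lemma nu_pos:
  fixes \<nu> :: "('k::topological_space \<Rightarrow>\<^sub>C real) \<Rightarrow>\<^sub>L real"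
  assumes "norm \<nu> \<le> 1" "blinfun_apply \<nu> (const_bcontfun 1) = 1"
    and "\<And>t. 0 \<le> apply_bcontfun \<psi> t"
  shows "0 \<le> blinfun_apply \<nu> \<psi>"
proof -
  define c where "c = norm \<psi>"
  define \<phi> where "\<phi> = c *\<^sub>R const_bcontfun 1 - \<psi>"
  have "norm \<phi> \<le> c"
  proof (rule norm_bound)
    fix t
    have "apply_bcontfun \<psi> t \<le> c" using abs_apply_le[of \<psi> t] by (simp add: c_def)
    then show "norm (apply_bcontfun \<phi> t) \<le> c" using assms(3)[of t] by (simp add: \<phi>_def)
  qed
  then have "\<bar>blinfun_apply \<nu> \<phi>\<bar> \<le> c" using nu_one_le[OF assms(1), of \<phi>] by simp
  moreover have "blinfun_apply \<nu> \<phi> = c - blinfun_apply \<nu> \<psi>"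
    by (simp add: \<phi>_def blinfun.diff_right blinfun.scaleR_right assms(2))
  ultimately show ?thesis by simp
qed

lemma conv_one:
  fixes A B u :: real
  assumes "0 < u" "u < 1" "A \<le> 1" "B \<le> 1" "(1 - u) * A + u * B = 1"
  shows "A = 1" "B = 1"
proof -
  have p1: "0 \<le> (1 - u) * (1 - A)" "0 \<le> u * (1 - B)" using assms by simp_all
  have s: "(1 - u) * (1 - A) + u * (1 - B) = 0" using assms(5) by (simp add: algebra_simps)
  then have "(1 - u) * (1 - A) = 0" "u * (1 - B) = 0" using p1 by linarith+
  then show "A = 1" "B = 1" using assms(1,2) by simp_all
qed

lemma conv_zero:
  fixes A B u :: real
  assumes "0 < u" "u < 1" "0 \<le> A" "0 \<le> B" "(1 - u) * A + u * B = 0"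
  shows "A = 0"
proof -
  have p1: "0 \<le> (1 - u) * A" "0 \<le> u * B" using assms by simp_all
  then have "(1 - u) * A = 0" using assms(5) by linarith
  then show "A = 0" using assms(1,2) by simp
qed

lemma max_bnd:
  fixes a b n :: real
  assumes "\<bar>a\<bar> \<le> n" "\<bar>b\<bar> \<le> n"
  shows "\<bar>max (a - b) 0\<bar> \<le> 2 * n"
  unfolding max_def using assms by (auto simp: abs_le_iff)

lemma pos_delta:
  fixes \<nu>a \<nu>b :: "('k::topological_space \<Rightarrow>\<^sub>C real) \<Rightarrow>\<^sub>L real"
  assumes "norm \<nu>a \<le> 1" "norm \<nu>b \<le> 1" "0 < u" "u < 1"
    and "(1 - u) *\<^sub>R \<nu>a + u *\<^sub>R \<nu>b = delta k"
  shows "\<nu>a = delta k"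
proof -
  let ?one = "const_bcontfun 1 :: ('k \<Rightarrow>\<^sub>C real)"
  have comb: "(1 - u) * blinfun_apply \<nu>a g + u * blinfun_apply \<nu>b g = apply_bcontfun g k" for g
    using arg_cong[OF assms(5), of "\<lambda>h. blinfun_apply h g"] by (simp add: blinfun.add_left blinfun.scaleR_left)
  have "blinfun_apply \<nu>a ?one \<le> 1" "blinfun_apply \<nu>b ?one \<le> 1"
    using nu_one_le[OF assms(1), of ?one] nu_one_le[OF assms(2), of ?one] by (auto simp: norm_const1)
  moreover have "(1 - u) * blinfun_apply \<nu>a ?one + u * blinfun_apply \<nu>b ?one = 1"
    using comb[of ?one] by simp
  ultimately have onea: "blinfun_apply \<nu>a ?one = 1" and oneb: "blinfun_apply \<nu>b ?one = 1"
    using conv_one[OF assms(3,4)] by blast+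
  have zero: "blinfun_apply \<nu>a \<psi> = 0" if "\<And>t. 0 \<le> apply_bcontfun \<psi> t" "apply_bcontfun \<psi> k = 0" for \<psi>
  proof -
    have "0 \<le> blinfun_apply \<nu>a \<psi>" "0 \<le> blinfun_apply \<nu>b \<psi>"
      using nu_pos[OF assms(1) onea that(1)] nu_pos[OF assms(2) oneb that(1)] by auto
    moreover have "(1 - u) * blinfun_apply \<nu>a \<psi> + u * blinfun_apply \<nu>b \<psi> = 0"
      using comb[of \<psi>] that(2) by simp
    ultimately show ?thesis using conv_zero[OF assms(3,4)] by blast
  qed
  show ?thesis
  proof (rule blinfun_eqI)
    fix \<phi> :: "'k \<Rightarrow>\<^sub>C real"
    define p where "p = (Bcontfun (\<lambda>t. max (apply_bcontfun \<phi> t - apply_bcontfun \<phi> k) 0) :: ('k \<Rightarrow>\<^sub>C real))"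
    define m where "m = (Bcontfun (\<lambda>t. max (apply_bcontfun \<phi> k - apply_bcontfun \<phi> t) 0) :: ('k \<Rightarrow>\<^sub>C real))"
    have pa: "apply_bcontfun p = (\<lambda>t. max (apply_bcontfun \<phi> t - apply_bcontfun \<phi> k) 0)"
      unfolding p_def
      apply (rule bc_make[where B="2 * norm \<phi>"])
       apply (auto intro!: continuous_intros)[1]
      by (rule max_bnd[OF abs_apply_le abs_apply_le])
    have ma: "apply_bcontfun m = (\<lambda>t. max (apply_bcontfun \<phi> k - apply_bcontfun \<phi> t) 0)"
      unfolding m_def
      apply (rule bc_make[where B="2 * norm \<phi>"])
       apply (auto intro!: continuous_intros)[1]
      by (rule max_bnd[OF abs_apply_le abs_apply_le])
    have dec: "\<phi> = apply_bcontfun \<phi> k *\<^sub>R ?one + p - m"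
      by (rule bcontfun_eqI) (simp add: pa ma)
    have "blinfun_apply \<nu>a p = 0" "blinfun_apply \<nu>a m = 0"
      by (rule zero; simp add: pa ma)+
    then have "blinfun_apply \<nu>a \<phi> = apply_bcontfun \<phi> k"
      by (subst dec) (simp add: blinfun.diff_right blinfun.add_right blinfun.scaleR_right onea)
    then show "blinfun_apply \<nu>a \<phi> = blinfun_apply (delta k) \<phi>" by simp
  qed
qed

lemma FT_ext_face:
  fixes T :: "'a::real_normed_vector \<Rightarrow> ('k::t2_space \<Rightarrow>\<^sub>C real)"
  assumes UE: "U_embedding T" and x: "norm x = 1" and k: "apply_bcontfun (T x) k = 1"
  shows "F_T T k extreme_point_of face x"
proof -
  let ?f = "F_T T k"
  have fx: "blinfun_apply ?f x = 1" using k by (simp add: FT_apply[OF UE])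
  have nf: "norm ?f = 1"
  proof -
    have "norm (blinfun_apply ?f x) \<le> norm ?f * norm x" by (rule norm_blinfun)
    then show ?thesis using FT_norm[OF UE, of k] fx x by simp
  qed
  have ext: "\<exists>\<nu>. (\<forall>y. blinfun_apply \<nu> (T y) = blinfun_apply g y) \<and> norm \<nu> = norm g" for g :: "'a \<Rightarrow>\<^sub>L real"
  proof -
    have "\<exists>!\<nu> :: ('k \<Rightarrow>\<^sub>C real) \<Rightarrow>\<^sub>L real. (\<forall>y. blinfun_apply \<nu> (T y) = blinfun_apply g y) \<and> norm \<nu> = norm g"
      using UE unfolding U_embedding_def by blast
    then show ?thesis by (rule ex1_implies_ex)
  qed
  have uniq: "\<nu> = delta k" if "\<forall>y. blinfun_apply \<nu> (T y) = blinfun_apply ?f y" "norm \<nu> = 1" for \<nu>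
  proof -
    have ex1: "\<exists>!ys :: ('k \<Rightarrow>\<^sub>C real) \<Rightarrow>\<^sub>L real. (\<forall>y. blinfun_apply ys (T y) = blinfun_apply ?f y) \<and> norm ys = norm ?f"
      using UE unfolding U_embedding_def by blast
    show ?thesis
      by (rule ex1_uniq[OF ex1]) (use that nf in \<open>auto simp: delta_ext[OF UE] delta_norm FT_apply[OF UE]\<close>)
  qed
  have key: "a = ?f" if a: "a \<in> face x" and b: "b \<in> face x" and u: "0 < u" "u < 1"
    and eq: "?f = (1 - u) *\<^sub>R a + u *\<^sub>R b" for a b u
  proof -
    obtain \<nu>a where \<nu>a: "\<forall>y. blinfun_apply \<nu>a (T y) = blinfun_apply a y" "norm \<nu>a = norm a"
      using ext by blast
    obtain \<nu>b where \<nu>b: "\<forall>y. blinfun_apply \<nu>b (T y) = blinfun_apply b y" "norm \<nu>b = norm b"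
      using ext by blast
    have na: "norm a = 1" and nb: "norm b = 1" using a b by (auto simp: face_def)
    define \<nu> where "\<nu> = (1 - u) *\<^sub>R \<nu>a + u *\<^sub>R \<nu>b"
    have \<nu>T: "blinfun_apply \<nu> (T y) = blinfun_apply ?f y" for y
      by (simp add: \<nu>_def \<nu>a \<nu>b eq blinfun.add_left blinfun.scaleR_left)
    have "norm \<nu> \<le> (1 - u) * norm \<nu>a + u * norm \<nu>b"
      unfolding \<nu>_def using u
      by (intro order_trans[OF norm_triangle_ineq]) simp
    then have le: "norm \<nu> \<le> 1" using \<nu>a \<nu>b na nb by simp
    have "norm (blinfun_apply \<nu> (T x)) \<le> norm \<nu> * norm (T x)" by (rule norm_blinfun)
    then have "1 \<le> norm \<nu>" using \<nu>T[of x] fx x UE_norm[OF UE, of x] by simp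
    then have "\<nu> = delta k" using uniq \<nu>T le by auto
    then have "\<nu>a = delta k" using pos_delta[of \<nu>a \<nu>b u k] \<nu>a \<nu>b na nb u by (simp add: \<nu>_def)
    then show "a = ?f"
      by (intro blinfun_eqI) (metis \<nu>a(1) delta_ext[OF UE])
  qed
  show ?thesis
    unfolding extreme_point_of_def
  proof (intro conjI ballI)
    show "?f \<in> face x" using nf fx by (simp add: face_def)
    fix a b assume ab: "a \<in> face x" "b \<in> face x"
    show "?f \<notin> open_segment a b"
    proof
      assume "?f \<in> open_segment a b"
      then obtain u where u: "a \<noteq> b" "0 < u" "u < 1" "?f = (1 - u) *\<^sub>R a + u *\<^sub>R b"
        by (auto simp: in_segment)
      have "a = ?f" using key[OF ab u(2,3,4)] .
      moreover have "b = ?f" using key[OF ab(2,1), of "1 - u"] u by (simp add: algebra_simps)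
      ultimately show False using u(1) by simp
    qed
  qed
qed

lemma norm_le_from_unit:
  fixes f :: "'b::real_normed_vector \<Rightarrow>\<^sub>L real"
  assumes "\<And>x. norm x = 1 \<Longrightarrow> blinfun_apply f x \<le> c" "0 \<le> c"
  shows "norm f \<le> c"
proof (rule norm_blinfun_bound[OF assms(2)])
  fix x :: 'b
  show "norm (blinfun_apply f x) \<le> c * norm x"
  proof (cases "x = 0")
    case True then show ?thesis by simp
  next
    case False
    define y where "y = x /\<^sub>R norm x"
    have ny: "norm y = 1" "norm (- y) = 1" using False by (simp_all add: y_def)
    have x: "x = norm x *\<^sub>R y" using False by (simp add: y_def)
    have "blinfun_apply f y \<le> c" "- blinfun_apply f y \<le> c"
      using assms(1)[OF ny(1)] assms(1)[OF ny(2)] by (simp_all add: blinfun.minus_right)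
    then have "\<bar>blinfun_apply f y\<bar> \<le> c" by simp
    then have "norm x * \<bar>blinfun_apply f y\<bar> \<le> norm x * c" by (simp add: mult_left_mono)
    moreover have "blinfun_apply f x = norm x * blinfun_apply f y"
      by (subst x) (simp add: blinfun.scaleR_right)
    ultimately show ?thesis by (simp add: abs_mult mult.commute)
  qed
qed

lemma apply_bsum: "apply_bcontfun (sum f F) t = (\<Sum>i\<in>F. apply_bcontfun (f i) t)"
  by (induct F rule: infinite_finite_induct) auto

definition TL :: "('a::real_normed_vector \<Rightarrow> ('k::topological_space \<Rightarrow>\<^sub>C real)) \<Rightarrow> 'a \<Rightarrow>\<^sub>L ('k \<Rightarrow>\<^sub>C real)" where
  "TL T = Blinfun T"

lemma TL_bl: "U_embedding T \<Longrightarrow> bounded_linear T"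
  by (rule bounded_linear_intro[where K=1])
     (auto simp: UE_norm linear_add[OF UE_linear] linear_scale[OF UE_linear])

lemma TL_apply: "U_embedding T \<Longrightarrow> blinfun_apply (TL T) x = T x"
  unfolding TL_def by (subst bounded_linear_Blinfun_apply[OF TL_bl]) auto

lemma TL_norm: "U_embedding T \<Longrightarrow> norm (TL T) \<le> 1"
  by (rule norm_blinfun_bound) (auto simp: TL_apply UE_norm)

definition mop :: "(('k::topological_space \<Rightarrow>\<^sub>C real) \<Rightarrow>\<^sub>L real) \<Rightarrow> ('k \<Rightarrow>\<^sub>C real) \<Rightarrow> (('k \<Rightarrow>\<^sub>C real) \<Rightarrow>\<^sub>L real)" where
  "mop \<mu> \<psi> = Blinfun (\<lambda>\<phi>. blinfun_apply \<mu> (bmul \<psi> \<phi>))"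

lemma mop_apply: "blinfun_apply (mop \<mu> \<psi>) \<phi> = blinfun_apply \<mu> (bmul \<psi> \<phi>)"
proof -
  have "bounded_linear (\<lambda>\<phi>. blinfun_apply \<mu> (bmul \<psi> \<phi>))"
    by (rule bounded_linear_compose[OF blinfun.bounded_linear_right bmul_bl])
  then show ?thesis unfolding mop_def by (subst bounded_linear_Blinfun_apply) auto
qed

lemma cvx_abs:
  fixes a x y :: real
  assumes "0 \<le> a" "a \<le> 1" "\<bar>x\<bar> \<le> 1" "\<bar>y\<bar> \<le> 1"
  shows "\<bar>a * x + (1 - a) * y\<bar> \<le> 1"
proof -
  have "\<bar>a * x + (1 - a) * y\<bar> \<le> \<bar>a * x\<bar> + \<bar>(1 - a) * y\<bar>" by (rule abs_triangle_ineq)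
  also have "\<dots> = a * \<bar>x\<bar> + (1 - a) * \<bar>y\<bar>" using assms by (simp add: abs_mult)
  also have "\<dots> \<le> a * 1 + (1 - a) * 1"
    using assms by (intro add_mono mult_left_mono) auto
  finally show ?thesis by simp
qed

lemma step_E:
  fixes T :: "'a::real_normed_vector \<Rightarrow> ('k::topological_space \<Rightarrow>\<^sub>C real)"
  assumes UE: "U_embedding T"
    and ext: "e extreme_point_of (cball (0::'a \<Rightarrow>\<^sub>L real) 1)" and ne: "norm e = 1"
    and \<mu>T: "\<And>x. blinfun_apply \<mu> (T x) = blinfun_apply e x" and n\<mu>: "norm \<mu> = 1"
    and uniq: "\<And>\<nu>. (\<And>x. blinfun_apply \<nu> (T x) = blinfun_apply e x) \<Longrightarrow> norm \<nu> = 1 \<Longrightarrow> \<nu> = \<mu>"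
    and \<psi>: "\<And>t. 0 \<le> apply_bcontfun \<psi> t \<and> apply_bcontfun \<psi> t \<le> 1"
  shows "\<exists>c. \<forall>\<phi>. blinfun_apply \<mu> (bmul \<psi> \<phi>) = c * blinfun_apply \<mu> \<phi>"
proof -
  let ?one = "const_bcontfun 1 :: 'k \<Rightarrow>\<^sub>C real"
  define \<psi>' where "\<psi>' = ?one - \<psi>"
  define M1 where "M1 = mop \<mu> \<psi>"
  define M2 where "M2 = mop \<mu> \<psi>'"
  have sub: "blinfun_apply M1 \<phi>1 + blinfun_apply M2 \<phi>2 \<le> 1" if "norm \<phi>1 \<le> 1" "norm \<phi>2 \<le> 1" for \<phi>1 \<phi>2
  proof -
    have "blinfun_apply M1 \<phi>1 + blinfun_apply M2 \<phi>2 = blinfun_apply \<mu> (bmul \<psi> \<phi>1 + bmul \<psi>' \<phi>2)"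
      by (simp add: M1_def M2_def mop_apply blinfun.add_right)
    also have "\<dots> \<le> norm (bmul \<psi> \<phi>1 + bmul \<psi>' \<phi>2)"
      using nu_one_le[of \<mu> "bmul \<psi> \<phi>1 + bmul \<psi>' \<phi>2"] n\<mu> by simp
    also have "\<dots> \<le> 1"
    proof (rule norm_bound)
      fix t
      have "\<bar>apply_bcontfun \<phi>1 t\<bar> \<le> 1" "\<bar>apply_bcontfun \<phi>2 t\<bar> \<le> 1"
        using abs_apply_le[of \<phi>1 t] abs_apply_le[of \<phi>2 t] that by auto
      then show "norm (apply_bcontfun (bmul \<psi> \<phi>1 + bmul \<psi>' \<phi>2) t) \<le> 1"
        using cvx_abs[of "apply_bcontfun \<psi> t"] \<psi>[of t] by (simp add: \<psi>'_def)
    qed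
    finally show ?thesis .
  qed
  have M0: "blinfun_apply M1 0 = 0" "blinfun_apply M2 0 = 0" by (simp_all add: blinfun.zero_right)
  have nM2: "norm M2 \<le> 1"
    by (rule norm_le_from_unit) (use sub[of 0] M0 in auto)
  have nM1: "norm M1 \<le> 1 - norm M2"
  proof (rule norm_le_from_unit)
    fix \<phi>1 :: "'k \<Rightarrow>\<^sub>C real" assume u1: "norm \<phi>1 = 1"
    have "norm M2 \<le> 1 - blinfun_apply M1 \<phi>1"
    proof (rule norm_le_from_unit)
      fix \<phi>2 :: "'k \<Rightarrow>\<^sub>C real" assume "norm \<phi>2 = 1"
      then show "blinfun_apply M2 \<phi>2 \<le> 1 - blinfun_apply M1 \<phi>1" using sub[of \<phi>1 \<phi>2] u1 by simp
    next
      show "0 \<le> 1 - blinfun_apply M1 \<phi>1" using sub[of \<phi>1 0] M0 u1 by simp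
    qed
    then show "blinfun_apply M1 \<phi>1 \<le> 1 - norm M2" by simp
  qed (use nM2 in simp)
  have sumM: "M1 + M2 = \<mu>"
  proof (rule blinfun_eqI)
    fix \<phi>
    have "bmul \<psi> \<phi> + bmul \<psi>' \<phi> = \<phi>"
      by (rule bcontfun_eqI) (simp add: \<psi>'_def algebra_simps)
    then show "blinfun_apply (M1 + M2) \<phi> = blinfun_apply \<mu> \<phi>"
      by (metis M1_def M2_def blinfun.add_right mop_apply plus_blinfun.rep_eq)
  qed
  define e1 where "e1 = M1 o\<^sub>L TL T"
  define e2 where "e2 = M2 o\<^sub>L TL T"
  have e1a: "blinfun_apply e1 x = blinfun_apply M1 (T x)" for x by (simp add: e1_def TL_apply[OF UE])
  have e2a: "blinfun_apply e2 x = blinfun_apply M2 (T x)" for x by (simp add: e2_def TL_apply[OF UE])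
  have esum: "e1 + e2 = e"
    by (rule blinfun_eqI) (metis e1a e2a \<mu>T sumM blinfun.add_left plus_blinfun.rep_eq)
  have ne1: "norm e1 \<le> norm M1"
    unfolding e1_def using norm_blinfun_compose[of M1 "TL T"] TL_norm[OF UE]
    by (smt (verit) mult_left_le norm_ge_zero)
  have ne2: "norm e2 \<le> norm M2"
    unfolding e2_def using norm_blinfun_compose[of M2 "TL T"] TL_norm[OF UE]
    by (smt (verit) mult_left_le norm_ge_zero)
  have "1 \<le> norm e1 + norm e2" using ne esum norm_triangle_ineq[of e1 e2] by simp
  then have l: "norm e1 = norm M1" "norm e2 = norm M2" "norm M1 + norm M2 = 1"
    using ne1 ne2 nM1 by linarith+
  show ?thesis
  proof (cases "norm M1 = 0")
    case True
    then have "M1 = 0" by simp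
    then show ?thesis by (intro exI[of _ 0]) (metis M1_def mop_apply mult_zero_left zero_blinfun.rep_eq)
  next
    case False
    show ?thesis
    proof (cases "norm M2 = 0")
      case True
      then have "M1 = \<mu>" using sumM by simp
      then show ?thesis by (intro exI[of _ 1]) (metis M1_def mop_apply mult_1)
    next
      case False2: False
      define l1 where "l1 = norm M1"
      define l2 where "l2 = norm M2"
      have lpos: "0 < l1" "0 < l2" "l1 + l2 = 1" using False False2 l by (auto simp: l1_def l2_def)
      define g1 where "g1 = (1 / l1) *\<^sub>R e1"
      define g2 where "g2 = (1 / l2) *\<^sub>R e2"
      have g1n: "norm g1 = 1" using l lpos by (simp add: g1_def l1_def)
      have g2n: "norm g2 = 1" using l lpos by (simp add: g2_def l2_def)
      have eg: "e = (1 - l2) *\<^sub>R g1 + l2 *\<^sub>R g2"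
      proof -
        have q: "(1 - l2) / l1 = 1" using lpos by simp
        show ?thesis using lpos esum by (simp add: g1_def g2_def q)
      qed
      have "g1 = g2"
      proof (rule ccontr)
        assume "g1 \<noteq> g2"
        then have "e \<in> open_segment g1 g2"
          unfolding in_segment using lpos eg by (auto intro!: exI[of _ l2])
        moreover have "g1 \<in> cball 0 1" "g2 \<in> cball 0 1" using g1n g2n by auto
        ultimately show False using ext by (auto simp: extreme_point_of_def)
      qed
      then have "e = g1" using eg by (simp add: algebra_simps)
      then have e1e: "e1 = l1 *\<^sub>R e" using lpos by (simp add: g1_def)
      define \<nu> where "\<nu> = (1 / l1) *\<^sub>R M1"
      have "\<nu> = \<mu>"
      proof (rule uniq)
        fix x
        show "blinfun_apply \<nu> (T x) = blinfun_apply e x"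
          using e1a[of x] e1e lpos by (simp add: \<nu>_def scaleR_blinfun.rep_eq) (metis nonzero_mult_div_cancel_left order_less_irrefl)
        show "norm \<nu> = 1" using lpos by (simp add: \<nu>_def l1_def)
      qed
      then have "l1 *\<^sub>R \<mu> = l1 *\<^sub>R ((1 / l1) *\<^sub>R M1)" by (simp add: \<nu>_def)
      then have "M1 = l1 *\<^sub>R \<mu>" using lpos by simp
      then show ?thesis by (intro exI[of _ l1]) (metis M1_def mop_apply scaleR_blinfun.rep_eq real_scaleR_def)
    qed
  qed
qed

lemma step_F:
  fixes \<mu> :: "('k::topological_space \<Rightarrow>\<^sub>C real) \<Rightarrow>\<^sub>L real"
  assumes E: "\<And>\<psi>. (\<And>t. 0 \<le> apply_bcontfun \<psi> t \<and> apply_bcontfun \<psi> t \<le> 1) \<Longrightarrow>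
                \<exists>c. \<forall>\<phi>. blinfun_apply \<mu> (bmul \<psi> \<phi>) = c * blinfun_apply \<mu> \<phi>"
  shows "blinfun_apply \<mu> (bmul \<psi> \<phi>) * blinfun_apply \<mu> (const_bcontfun 1)
         = blinfun_apply \<mu> \<psi> * blinfun_apply \<mu> \<phi>"
proof -
  let ?one = "const_bcontfun 1 :: 'k \<Rightarrow>\<^sub>C real"
  define n where "n = norm \<psi>"
  define d where "d = 2 * n + 2"
  have dpos: "d > 0" by (simp add: d_def n_def add_nonneg_pos)
  define \<psi>0 where "\<psi>0 = (1 / d) *\<^sub>R \<psi> + (1/2) *\<^sub>R ?one"
  have r: "0 \<le> apply_bcontfun \<psi>0 t \<and> apply_bcontfun \<psi>0 t \<le> 1" for t
  proof -
    have a: "\<bar>apply_bcontfun \<psi> t\<bar> \<le> n" using abs_apply_le by (simp add: n_def)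
    have "\<bar>apply_bcontfun \<psi> t / d\<bar> \<le> 1/2"
      using a dpos by (simp add: d_def abs_divide divide_le_eq)
    then have "- (1/2) \<le> apply_bcontfun \<psi> t / d" "apply_bcontfun \<psi> t / d \<le> 1/2"
      by (auto simp only: abs_le_iff)
    moreover have "apply_bcontfun \<psi>0 t = apply_bcontfun \<psi> t / d + 1/2" by (simp add: \<psi>0_def)
    ultimately show ?thesis by linarith
  qed
  obtain c where c: "\<And>\<phi>. blinfun_apply \<mu> (bmul \<psi>0 \<phi>) = c * blinfun_apply \<mu> \<phi>"
    using E[OF r] by blast
  have b1: "bmul \<psi>0 ?one = \<psi>0" by (rule bcontfun_eqI) simp
  have psi: "\<psi> = d *\<^sub>R \<psi>0 - (d/2) *\<^sub>R ?one"
    using dpos by (intro bcontfun_eqI) (simp add: \<psi>0_def algebra_simps)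
  have bm: "bmul \<psi> \<phi> = d *\<^sub>R bmul \<psi>0 \<phi> - (d/2) *\<^sub>R \<phi>"
    using dpos by (intro bcontfun_eqI) (simp add: \<psi>0_def algebra_simps)
  have m1: "blinfun_apply \<mu> (bmul \<psi> \<phi>) = (d * c - d/2) * blinfun_apply \<mu> \<phi>"
    by (simp add: bm blinfun.diff_right blinfun.scaleR_right c algebra_simps)
  have m2: "blinfun_apply \<mu> \<psi> = (d * c - d/2) * blinfun_apply \<mu> ?one"
    using c[of ?one] b1
    by (subst psi) (simp add: blinfun.diff_right blinfun.scaleR_right algebra_simps)
  show ?thesis by (simp add: m1 m2)
qed

lemma step_G:
  fixes \<mu> :: "('k::topological_space \<Rightarrow>\<^sub>C real) \<Rightarrow>\<^sub>L real"
  assumes K: "compact (UNIV :: 'k set)"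
    and mult: "\<And>\<psi> \<phi>. blinfun_apply \<mu> (bmul \<psi> \<phi>) * blinfun_apply \<mu> (const_bcontfun 1)
         = blinfun_apply \<mu> \<psi> * blinfun_apply \<mu> \<phi>"
    and a: "blinfun_apply \<mu> (const_bcontfun 1) \<noteq> 0"
  shows "\<exists>k. \<forall>\<phi>. blinfun_apply \<mu> \<phi> = blinfun_apply \<mu> (const_bcontfun 1) * apply_bcontfun \<phi> k"
proof (rule ccontr)
  let ?one = "const_bcontfun 1 :: 'k \<Rightarrow>\<^sub>C real"
  define a where "a = blinfun_apply \<mu> ?one"
  assume "\<not> ?thesis"
  then have "\<forall>k. \<exists>\<phi>. blinfun_apply \<mu> \<phi> \<noteq> a * apply_bcontfun \<phi> k" unfolding a_def by blast
  then obtain \<Phi> where \<Phi>': "\<forall>k. blinfun_apply \<mu> (\<Phi> k) \<noteq> a * apply_bcontfun (\<Phi> k) k"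
    using choice[OF \<open>\<forall>k. \<exists>\<phi>. _\<close>] by blast
  have \<Phi>: "blinfun_apply \<mu> (\<Phi> k) \<noteq> a * apply_bcontfun (\<Phi> k) k" for k using \<Phi>' by blast
  define ch where "ch k = a *\<^sub>R \<Phi> k - blinfun_apply \<mu> (\<Phi> k) *\<^sub>R ?one" for k
  have ch0: "blinfun_apply \<mu> (ch k) = 0" for k
    by (simp add: ch_def blinfun.diff_right blinfun.scaleR_right a_def)
  have chk: "apply_bcontfun (ch k) k \<noteq> 0" for k
    using \<Phi>[of k] by (simp add: ch_def)
  have opn: "open {t. apply_bcontfun (ch k) t \<noteq> 0}" for k
    by (rule open_Collect_neq) auto
  have cov: "(UNIV::'k set) \<subseteq> (\<Union>k\<in>UNIV. {t. apply_bcontfun (ch k) t \<noteq> 0})"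
    using chk by blast
  obtain F where F: "finite F" "(UNIV::'k set) \<subseteq> (\<Union>k\<in>F. {t. apply_bcontfun (ch k) t \<noteq> 0})"
  proof -
    obtain C' where "C' \<subseteq> UNIV" "finite C'" "(UNIV::'k set) \<subseteq> (\<Union>k\<in>C'. {t. apply_bcontfun (ch k) t \<noteq> 0})"
      by (rule compactE_image[OF K, of UNIV "\<lambda>k. {t. apply_bcontfun (ch k) t \<noteq> 0}", OF opn cov])
    then show ?thesis using that by simp
  qed
  define g where "g = (\<Sum>k\<in>F. bmul (ch k) (ch k))"
  have ga: "apply_bcontfun g t = (\<Sum>k\<in>F. (apply_bcontfun (ch k) t)^2)" for t
    by (simp add: g_def apply_bsum power2_eq_square)
  have gpos: "apply_bcontfun g t > 0" for t
  proof -
    obtain k where "k \<in> F" "apply_bcontfun (ch k) t \<noteq> 0" using F(2) by blast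
    then show ?thesis unfolding ga by (intro sum_pos2[OF F(1)]) auto
  qed
  have "blinfun_apply \<mu> (bmul (ch k) (ch k)) = 0" for k
    using mult[of "ch k" "ch k"] ch0[of k] a by simp
  then have mug: "blinfun_apply \<mu> g = 0" by (simp add: g_def blinfun.sum_right)
  have cont: "continuous_on UNIV (\<lambda>t. 1 / apply_bcontfun g t)"
    using gpos by (intro continuous_intros) (auto simp: less_le)
  have "compact (range (\<lambda>t. 1 / apply_bcontfun g t))"
    by (rule compact_continuous_image[OF cont K])
  then have "(\<lambda>t. 1 / apply_bcontfun g t) \<in> bcontfun"
    using cont by (simp add: bcontfun_def compact_imp_bounded)
  then have ha: "apply_bcontfun (Bcontfun (\<lambda>t. 1 / apply_bcontfun g t)) = (\<lambda>t. 1 / apply_bcontfun g t)"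
    by (simp add: Bcontfun_inverse)
  have "bmul g (Bcontfun (\<lambda>t. 1 / apply_bcontfun g t)) = ?one"
    using gpos by (intro bcontfun_eqI) (simp add: ha less_le)
  then have "a * a = 0" using mult[of g "Bcontfun (\<lambda>t. 1 / apply_bcontfun g t)"] mug by (simp add: a_def)
  then show False using a by (simp add: a_def)
qed

lemma ext_ball:
  fixes T :: "'a::real_normed_vector \<Rightarrow> ('k::t2_space \<Rightarrow>\<^sub>C real)"
  assumes K: "compact (UNIV :: 'k set)" and UE: "U_embedding T"
    and ext: "e extreme_point_of (dual_ball::('a \<Rightarrow>\<^sub>L real) set)"
  shows "\<exists>k. e = F_T T k \<or> e = - F_T T k"
proof -
  let ?one = "const_bcontfun 1 :: 'k \<Rightarrow>\<^sub>C real"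
  have extc: "e extreme_point_of cball (0::'a \<Rightarrow>\<^sub>L real) 1" using ext by (simp add: dual_ball_def)
  have eb: "norm e \<le> 1" using extc by (auto simp: extreme_point_of_def)
  show ?thesis
  proof (cases "\<forall>x::'a. x = 0")
    case True
    then have "e = F_T T undefined" by (intro blinfun_eqI) (metis blinfun.zero_right)
    then show ?thesis by blast
  next
    case False
    then obtain x0 :: 'a where x0: "x0 \<noteq> 0" by blast
    have "T x0 \<noteq> 0" using UE_norm[OF UE, of x0] x0 by auto
    then obtain k0 where k0: "apply_bcontfun (T x0) k0 \<noteq> 0"
      by (metis bcontfun_eqI zero_bcontfun.rep_eq)
    define g where "g = F_T T k0"
    have g0: "g \<noteq> 0"
    proof
      assume "g = 0"
      then have "blinfun_apply g x0 = 0" by simp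
      then show False using k0 by (simp add: g_def FT_apply[OF UE])
    qed
    have gb: "g \<in> cball 0 1" "- g \<in> cball 0 1" using FT_norm[OF UE, of k0] by (auto simp: g_def)
    have enz: "e \<noteq> 0"
    proof
      assume e0: "e = 0"
      have "g \<noteq> - g"
      proof
        assume h: "g = - g"
        have "g + g = 0" using h[symmetric] by (simp only: neg_eq_iff_add_eq_0)
        then have "(2::real) *\<^sub>R g = 0" by (simp add: scaleR_2)
        then show False using g0 by simp
      qed
      then have "0 \<in> open_segment g (- g)"
        unfolding in_segment by (auto intro!: exI[of _ "1/2"])
      then show False using extc e0 gb by (auto simp: extreme_point_of_def)
    qed
    have ne: "norm e = 1"
    proof (rule ccontr)
      assume "norm e \<noteq> 1"
      then have n1: "norm e < 1" using eb by simp
      define n where "n = norm e"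
      have npos: "0 < n" using enz by (simp add: n_def)
      define a where "a = (2 - n) *\<^sub>R e"
      define b where "b = n *\<^sub>R e"
      have "a \<noteq> b"
      proof
        assume "a = b"
        then have "(2 - n) *\<^sub>R e - n *\<^sub>R e = 0" by (simp add: a_def b_def)
        then have "(2 - n - n) *\<^sub>R e = 0" by (simp only: scaleR_diff_left)
        then show False using enz n1 by (simp add: n_def)
      qed
      moreover have "e = (1 - 1/2) *\<^sub>R a + (1/2) *\<^sub>R b"
        by (simp add: a_def b_def algebra_simps)
      ultimately have "e \<in> open_segment a b"
        unfolding in_segment by (auto intro!: exI[of _ "1/2"])
      moreover have "norm a \<le> 1"
      proof -
        have "norm a = (2 - n) * n" using n1 by (simp add: a_def n_def)
        also have "\<dots> \<le> 1"
        proof -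
          have "0 \<le> (1 - n) * (1 - n)" by simp
          then show ?thesis by (simp add: algebra_simps)
        qed
        finally show ?thesis .
      qed
      moreover have "norm b \<le> 1"
        using n1 npos by (simp add: b_def n_def mult_le_one)
      ultimately show False using extc by (auto simp: extreme_point_of_def)
    qed
    have ex1: "\<exists>!ys :: ('k \<Rightarrow>\<^sub>C real) \<Rightarrow>\<^sub>L real. (\<forall>x. blinfun_apply ys (T x) = blinfun_apply e x) \<and> norm ys = norm e"
      using UE unfolding U_embedding_def by blast
    obtain \<mu> where \<mu>: "\<forall>x. blinfun_apply \<mu> (T x) = blinfun_apply e x" "norm \<mu> = norm e"
      using ex1 by blast
    have uniq: "\<nu> = \<mu>" if "\<And>x. blinfun_apply \<nu> (T x) = blinfun_apply e x" "norm \<nu> = 1" for \<nu>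
      by (rule ex1_uniq[OF ex1]) (use that \<mu> ne in auto)
    have E: "\<exists>c. \<forall>\<phi>. blinfun_apply \<mu> (bmul \<psi> \<phi>) = c * blinfun_apply \<mu> \<phi>"
      if "\<And>t. 0 \<le> apply_bcontfun \<psi> t \<and> apply_bcontfun \<psi> t \<le> 1" for \<psi>
      by (rule step_E[OF UE extc ne _ _ uniq that]) (use \<mu> ne in auto)
    note mult = step_F[of \<mu>, OF E]
    have a: "blinfun_apply \<mu> ?one \<noteq> 0"
    proof
      assume a0: "blinfun_apply \<mu> ?one = 0"
      have "blinfun_apply \<mu> \<phi> = 0" for \<phi>
        using mult[of \<phi> \<phi>] a0 by simp
      then have "\<mu> = 0" by (intro blinfun_eqI) simp
      then show False using \<mu>(2) ne by simp
    qed
    obtain k where k: "\<And>\<phi>. blinfun_apply \<mu> \<phi> = blinfun_apply \<mu> ?one * apply_bcontfun \<phi> k"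
      using step_G[OF K mult a] by blast
    define c where "c = blinfun_apply \<mu> ?one"
    have kk: "blinfun_apply \<mu> \<phi> = c * apply_bcontfun \<phi> k" for \<phi>
      unfolding c_def by (rule k)
    have "\<mu> = c *\<^sub>R delta k" by (intro blinfun_eqI) (simp add: kk scaleR_blinfun.rep_eq)
    then have "\<bar>c\<bar> = 1" using \<mu>(2) ne by (simp add: delta_norm)
    moreover have "e = c *\<^sub>R F_T T k"
      by (intro blinfun_eqI) (simp add: \<mu>(1)[rule_format, symmetric] kk FT_apply[OF UE] scaleR_blinfun.rep_eq)
    ultimately show ?thesis by (cases "c \<ge> 0") auto
  qed
qed

lemma ext_neg:
  assumes "e extreme_point_of (cball (0::'a::real_normed_vector) 1)"
  shows "(- e) extreme_point_of (cball 0 1)"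
  unfolding extreme_point_of_def
proof (intro conjI ballI)
  show "- e \<in> cball 0 1" using assms by (simp add: extreme_point_of_def)
  fix a b :: 'a assume ab: "a \<in> cball 0 1" "b \<in> cball 0 1"
  show "- e \<notin> open_segment a b"
  proof
    assume "- e \<in> open_segment a b"
    then obtain u where "a \<noteq> b" "0 < u" "u < 1" "- e = (1 - u) *\<^sub>R a + u *\<^sub>R b"
      by (auto simp: in_segment)
    then have "e \<in> open_segment (-a) (-b)"
      unfolding in_segment by (auto intro!: exI[of _ u] simp: algebra_simps)
    moreover have "-a \<in> cball 0 1" "-b \<in> cball 0 1" using ab by auto
    ultimately show False using assms by (auto simp: extreme_point_of_def)
  qed
qed

theorem proposition4p7:
  fixes T :: "'a::banach \<Rightarrow> ('k::t2_space \<Rightarrow>\<^sub>C real)"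
  assumes "compact (UNIV :: 'k set)"
    and "U_embedding T"
  shows "proper_U_suitable
           (weak_star closure_of (F_T T ` {k. F_T T k \<in> ext_set dual_ball}))"
proof -
  define S where "S = {k. F_T T k \<in> ext_set dual_ball}"
  define E where "E = weak_star closure_of (F_T T ` S)"
  have Esub: "E \<subseteq> range (F_T T)"
    unfolding E_def by (rule closure_of_minimal[OF _ FT_closed[OF assms(2,1)]]) auto
  have Eball: "E \<subseteq> dual_ball"
    using Esub FT_norm[OF assms(2)] by (auto simp: dual_ball_def)
  have Eclosed: "closedin weak_star E" unfolding E_def by simp
  have EnegE: "uminus ` E = {f. - f \<in> E}" by force
  have nEclosed: "closedin weak_star (uminus ` E)"
    using closedin_continuous_map_preimage[OF ws_uminus_cont Eclosed] EnegE by simp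
  have extsym: "uminus ` ext_set dual_ball \<subseteq> ext_set (dual_ball::('a \<Rightarrow>\<^sub>L real) set)"
    by (auto simp: ext_set_def dual_ball_def ext_neg)
  have i: "E \<inter> uminus ` E \<inter> sphere 0 1 = {}"
  proof (rule ccontr)
    assume "E \<inter> uminus ` E \<inter> sphere 0 1 \<noteq> {}"
    then obtain f where f: "f \<in> E" "- f \<in> E" "norm f = 1" by force
    obtain k k' where k: "f = F_T T k" "- f = F_T T k'" using f Esub by blast
    have ex1: "\<exists>!ys :: ('k \<Rightarrow>\<^sub>C real) \<Rightarrow>\<^sub>L real. (\<forall>x. blinfun_apply ys (T x) = blinfun_apply f x) \<and> norm ys = norm f"
      using assms(2) unfolding U_embedding_def by blast
    have "delta k = - delta k'"
    proof (rule ex1_uniq[OF ex1])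
      show "(\<forall>x. blinfun_apply (delta k) (T x) = blinfun_apply f x) \<and> norm (delta k) = norm f"
        using k f by (simp add: delta_ext[OF assms(2)] delta_norm FT_apply[OF assms(2)])
      have "blinfun_apply f x = - blinfun_apply (F_T T k') x" for x
        using k(2) by (metis blinfun.minus_left minus_minus)
      then show "(\<forall>x. blinfun_apply (- delta k') (T x) = blinfun_apply f x) \<and> norm (- delta k') = norm f"
        using f by (simp add: delta_ext[OF assms(2)] delta_norm FT_apply[OF assms(2)] blinfun.minus_left)
    qed
    then have "blinfun_apply (delta k) (const_bcontfun 1) = blinfun_apply (- delta k') (const_bcontfun 1)"
      by simp
    then show False by (simp add: blinfun.minus_left)
  qed
  have ii: "E \<union> uminus ` E = weak_star closure_of (ext_set dual_ball)"
  proof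
    have "E \<subseteq> weak_star closure_of (ext_set dual_ball)"
      unfolding E_def by (rule closure_of_mono) (auto simp: S_def)
    moreover have "uminus ` E \<subseteq> weak_star closure_of (ext_set dual_ball)"
    proof -
      have "uminus ` E \<subseteq> weak_star closure_of (uminus ` F_T T ` S)"
        unfolding E_def by (rule continuous_map_image_closure_subset[OF ws_uminus_cont])
      also have "\<dots> \<subseteq> weak_star closure_of (ext_set dual_ball)"
        using extsym by (intro closure_of_mono) (auto simp: S_def)
      finally show ?thesis .
    qed
    ultimately show "E \<union> uminus ` E \<subseteq> weak_star closure_of (ext_set dual_ball)" by blast
    show "weak_star closure_of (ext_set dual_ball) \<subseteq> E \<union> uminus ` E"
    proof (rule closure_of_minimal[OF _ closedin_Un[OF Eclosed nEclosed]])
      show "ext_set dual_ball \<subseteq> E \<union> uminus ` E"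
      proof
        fix e :: "'a \<Rightarrow>\<^sub>L real" assume e: "e \<in> ext_set dual_ball"
        then obtain k where k: "e = F_T T k \<or> e = - F_T T k"
          using ext_ball[OF assms] by (auto simp: ext_set_def)
        have FS: "F_T T ` S \<subseteq> E" unfolding E_def by (rule closure_of_subset) simp
        show "e \<in> E \<union> uminus ` E"
        proof (cases "e = F_T T k")
          case True then show ?thesis using e FS by (auto simp: S_def)
        next
          case False
          then have "F_T T k = - e" using k by simp
          moreover have "- e \<in> ext_set dual_ball" using e extsym by blast
          ultimately have "- e \<in> E" using FS unfolding S_def by (metis (mono_tags, lifting) image_subset_iff mem_Collect_eq)
          then show ?thesis by (auto intro!: image_eqI[of _ _ "- e"])
        qed
      qed
    qed
  qed
  have iii: "E \<inter> face x = E \<inter> (weak_star closure_of (ext_set (face x)))" if x: "norm x = 1" for x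
  proof
    show "E \<inter> face x \<subseteq> E \<inter> weak_star closure_of ext_set (face x)"
    proof
      fix f assume f: "f \<in> E \<inter> face x"
      then obtain k where k: "f = F_T T k" using Esub by blast
      then have "apply_bcontfun (T x) k = 1" using f by (simp add: face_def FT_apply[OF assms(2)])
      then have "f \<in> ext_set (face x)" using FT_ext_face[OF assms(2) x] k by (simp add: ext_set_def)
      then show "f \<in> E \<inter> weak_star closure_of ext_set (face x)"
        using f closure_of_subset[of "ext_set (face x)" weak_star] by auto
    qed
    show "E \<inter> weak_star closure_of ext_set (face x) \<subseteq> E \<inter> face x"
    proof
      fix f assume f: "f \<in> E \<inter> weak_star closure_of ext_set (face x)"
      have "ext_set (face x) \<subseteq> {g. blinfun_apply g x = 1}"
        by (auto simp: ext_set_def face_def extreme_point_of_def)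
      then have "weak_star closure_of ext_set (face x) \<subseteq> {g. blinfun_apply g x = 1}"
        by (rule closure_of_minimal[OF _ ws_closed_eval])
      then have fx: "blinfun_apply f x = 1" using f by blast
      have "norm f \<le> 1" using f Eball by (auto simp: dual_ball_def)
      moreover have "norm (blinfun_apply f x) \<le> norm f * norm x" by (rule norm_blinfun)
      ultimately have "norm f = 1" using fx x by simp
      then show "f \<in> E \<inter> face x" using f fx by (simp add: face_def)
    qed
  qed
  show ?thesis
    unfolding proper_U_suitable_def U_suitable_def
    using Eball Eclosed i ii iii by (simp add: E_def S_def)
qed

end
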